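(* Let $X$ be a finite connected symmetric graph and let $G$ be an arc-transitive group of automorphisms of $X$. Then the split-length of $(X,G)$ is finite.
   Context: Graphs are finite and simple; maps are composed on the right. A regular covering projection $\wp\colon\tilde X\to X$ is a surjective graph homomorphism between connected graphs, locally bijective on neighbourhoods, whose group $\mathrm{CT}(\wp)$ of covering transformations (automorphisms $c$ with $c\wp=\wp$) acts regularly on fibres; a $2$-cover has $\mathrm{CT}(\wp)\cong\mathbb{Z}_2$. A lift of $g\in\mathrm{Aut}\,X$ is $\tilde g$ with $\wp g=\tilde g\wp$. A chain $X_n\xrightarrow{\wp_n}X_{n-1}\to\cdots\to X_1\xrightarrow{\wp_1}X_0=X$ of consecutive $2$-covers is $G$-admissible if there are groups $G=G_0,G_1,\dots,G_n$ with $G_j\leq\mathrm{Aut}\,X_j$ equal to the lift (group of all lifts) of $G_{j-1}$ along $\wp_j$ for each $j$; it is $G$-split-admissible if moreover every extension $\mathrm{CT}(\wp_j)\to G_j\to G_{j-1}$ splits (i.e. $\mathrm{CT}(\wp_j)$ has a complement in $G_j$). The split-length of $(X,G)$ is the largest $n$ for which a $G$-split-admissible chain of $n$ consecutive $2$-covers exists. *)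

theory Defs
  imports Main
begin

record 'a graph =
  verts :: "'a set"
  arcs  :: "'a rel"

definition graph :: "'a graph \<Rightarrow> bool" where
  "graph X \<longleftrightarrow> finite (verts X) \<and> arcs X \<subseteq> verts X \<times> verts X
      \<and> sym (arcs X) \<and> irrefl (arcs X)"

definition connected_graph :: "'a graph \<Rightarrow> bool" where
  "connected_graph X \<longleftrightarrow> verts X \<noteq> {} \<and>
     (\<forall>u\<in>verts X. \<forall>v\<in>verts X. (u, v) \<in> (arcs X)\<^sup>*)"

definition nbhd :: "'a graph \<Rightarrow> 'a \<Rightarrow> 'a set" where
  "nbhd X v = {u. (v, u) \<in> arcs X}"

definition aut :: "'a graph \<Rightarrow> ('a \<Rightarrow> 'a) set" where
  "aut X = {f. bij_betw f (verts X) (verts X) \<and> (\<forall>x. x \<notin> verts X \<longrightarrow> f x = x)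
      \<and> (\<forall>u\<in>verts X. \<forall>v\<in>verts X. (u, v) \<in> arcs X \<longleftrightarrow> (f u, f v) \<in> arcs X)}"

definition perm_group :: "('a \<Rightarrow> 'a) set \<Rightarrow> bool" where
  "perm_group G \<longleftrightarrow> id \<in> G \<and> (\<forall>f\<in>G. \<forall>g\<in>G. f \<circ> g \<in> G)
      \<and> (\<forall>f\<in>G. \<exists>g\<in>G. f \<circ> g = id \<and> g \<circ> f = id)"

definition aut_subgroup :: "'a graph \<Rightarrow> ('a \<Rightarrow> 'a) set \<Rightarrow> bool" where
  "aut_subgroup X G \<longleftrightarrow> G \<subseteq> aut X \<and> perm_group G"

definition vertex_transitive :: "'a graph \<Rightarrow> ('a \<Rightarrow> 'a) set \<Rightarrow> bool" where
  "vertex_transitive X G \<longleftrightarrow> (\<forall>u\<in>verts X. \<forall>v\<in>verts X. \<exists>g\<in>G. g u = v)"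

definition arc_transitive :: "'a graph \<Rightarrow> ('a \<Rightarrow> 'a) set \<Rightarrow> bool" where
  "arc_transitive X G \<longleftrightarrow>
     (\<forall>(u, v)\<in>arcs X. \<forall>(u', v')\<in>arcs X. \<exists>g\<in>G. g u = u' \<and> g v = v')"

definition symmetric_graph :: "'a graph \<Rightarrow> bool" where
  "symmetric_graph X \<longleftrightarrow> vertex_transitive X (aut X) \<and> arc_transitive X (aut X)"

definition covering :: "'b graph \<Rightarrow> 'a graph \<Rightarrow> ('b \<Rightarrow> 'a) \<Rightarrow> bool" where
  "covering Y X p \<longleftrightarrow> graph Y \<and> graph X \<and> connected_graph Y \<and> connected_graph X
     \<and> p ` verts Y = verts X
     \<and> (\<forall>u v. (u, v) \<in> arcs Y \<longrightarrow> (p u, p v) \<in> arcs X)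
     \<and> (\<forall>y\<in>verts Y. bij_betw p (nbhd Y y) (nbhd X (p y)))"

text \<open>Covering transformations: automorphisms \<open>c\<close> of \<open>Y\<close> with \<open>c p = p\<close>
  (maps composed on the right, i.e. \<open>p (c y) = p y\<close>).\<close>

definition CT :: "'b graph \<Rightarrow> ('b \<Rightarrow> 'a) \<Rightarrow> ('b \<Rightarrow> 'b) set" where
  "CT Y p = {c \<in> aut Y. \<forall>y\<in>verts Y. p (c y) = p y}"

definition regular_covering :: "'b graph \<Rightarrow> 'a graph \<Rightarrow> ('b \<Rightarrow> 'a) \<Rightarrow> bool" where
  "regular_covering Y X p \<longleftrightarrow> covering Y X p \<and>
     (\<forall>y\<in>verts Y. \<forall>y'\<in>verts Y. p y = p y' \<longrightarrow> (\<exists>!c. c \<in> CT Y p \<and> c y = y'))"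

definition two_cover :: "'b graph \<Rightarrow> 'a graph \<Rightarrow> ('b \<Rightarrow> 'a) \<Rightarrow> bool" where
  "two_cover Y X p \<longleftrightarrow> regular_covering Y X p \<and> card (CT Y p) = 2"

text \<open>Lifts: \<open>p g = g' p\<close> with right composition, i.e. \<open>p (g' y) = g (p y)\<close>.\<close>

definition is_lift :: "'b graph \<Rightarrow> ('b \<Rightarrow> 'a) \<Rightarrow> ('a \<Rightarrow> 'a) \<Rightarrow> ('b \<Rightarrow> 'b) \<Rightarrow> bool" where
  "is_lift Y p g g' \<longleftrightarrow> g' \<in> aut Y \<and> (\<forall>y\<in>verts Y. p (g' y) = g (p y))"

definition lift_group :: "'b graph \<Rightarrow> ('b \<Rightarrow> 'a) \<Rightarrow> ('a \<Rightarrow> 'a) set \<Rightarrow> ('b \<Rightarrow> 'b) set" where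
  "lift_group Y p G = {g'. \<exists>g\<in>G. is_lift Y p g g'}"

definition has_complement :: "('b \<Rightarrow> 'b) set \<Rightarrow> ('b \<Rightarrow> 'b) set \<Rightarrow> bool" where
  "has_complement H K \<longleftrightarrow> (\<exists>C. C \<subseteq> H \<and> perm_group C \<and> C \<inter> K = {id}
      \<and> (\<forall>g\<in>H. \<exists>h\<in>C. \<exists>k\<in>K. g = h \<circ> k))"

text \<open>One step of a split-admissible chain: \<open>p : Y \<rightarrow> X\<close> is a 2-cover along which
  every element of \<open>G\<close> lifts (so \<open>CT \<rightarrow> lift \<rightarrow> G\<close> is an extension), and the
  extension splits.\<close>

definition split_step :: "'a graph \<Rightarrow> ('a \<Rightarrow> 'a) set \<Rightarrow> 'b graph \<Rightarrow> ('b \<Rightarrow> 'a) \<Rightarrow> bool" where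
  "split_step X G Y p \<longleftrightarrow> two_cover Y X p
     \<and> (\<forall>g\<in>G. \<exists>g'. is_lift Y p g g')
     \<and> has_complement (lift_group Y p G) (CT Y p)"

text \<open>Chains of covers; covering graphs are (up to isomorphism) taken with vertices in \<open>nat\<close>
  (every cover of a finite graph in a 2-cover chain is finite).\<close>

fun split_chain_nat :: "nat graph \<Rightarrow> (nat \<Rightarrow> nat) set \<Rightarrow> nat \<Rightarrow> bool" where
  "split_chain_nat X G 0 = True"
| "split_chain_nat X G (Suc n) =
     (\<exists>(Y :: nat graph) p. split_step X G Y p \<and> split_chain_nat Y (lift_group Y p G) n)"

definition split_admissible_chain :: "'a graph \<Rightarrow> ('a \<Rightarrow> 'a) set \<Rightarrow> nat \<Rightarrow> bool" where
  "split_admissible_chain X G n \<longleftrightarrow> n = 0 \<or>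
     (\<exists>m (Y :: nat graph) p. n = Suc m \<and> split_step X G Y p
        \<and> split_chain_nat Y (lift_group Y p G) m)"

text \<open>Split-length is finite: the lengths of split-admissible chains are bounded
  (the length-0 chain always exists, so then the largest length exists).\<close>

definition split_length_finite :: "'a graph \<Rightarrow> ('a \<Rightarrow> 'a) set \<Rightarrow> bool" where
  "split_length_finite X G \<longleftrightarrow> finite {n. split_admissible_chain X G n}"

end

theory Submission
  imports Defs "HOL-Library.FuncSet"
begin

lemma aut_verts: "f \<in> aut X \<Longrightarrow> x \<in> verts X \<Longrightarrow> f x \<in> verts X"
  unfolding aut_def bij_betw_def by auto

lemma aut_out: "f \<in> aut X \<Longrightarrow> x \<notin> verts X \<Longrightarrow> f x = x"
  unfolding aut_def by auto

lemma aut_arcs: "f \<in> aut X \<Longrightarrow> u \<in> verts X \<Longrightarrow> v \<in> verts X \<Longrightarrow>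
   (u, v) \<in> arcs X \<longleftrightarrow> (f u, f v) \<in> arcs X"
  unfolding aut_def by auto

lemma id_aut: "id \<in> aut X"
  unfolding aut_def by auto

lemma aut_bij: assumes "f \<in> aut X" shows "bij f"
proof -
  have b: "bij_betw f (verts X) (verts X)" using assms unfolding aut_def by auto
  have "inj f"
  proof (rule injI)
    fix x y assume e: "f x = f y"
    show "x = y"
    proof (cases "x \<in> verts X"; cases "y \<in> verts X")
      assume "x \<in> verts X" "y \<in> verts X" thus ?thesis using b e unfolding bij_betw_def inj_on_def by auto
    next
      assume "x \<in> verts X" "y \<notin> verts X" thus ?thesis using e aut_verts[OF assms] aut_out[OF assms] by metis
    next
      assume "x \<notin> verts X" "y \<in> verts X" thus ?thesis using e aut_verts[OF assms] aut_out[OF assms] by metis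
    next
      assume "x \<notin> verts X" "y \<notin> verts X" thus ?thesis using e aut_out[OF assms] by metis
    qed
  qed
  moreover have "surj f"
  proof -
    { fix y have "y \<in> range f"
      proof (cases "y \<in> verts X")
        case True thus ?thesis using b unfolding bij_betw_def by auto
      next
        case False thus ?thesis using aut_out[OF assms False] by (metis rangeI)
      qed }
    thus ?thesis by auto
  qed
  ultimately show ?thesis by (simp add: bij_def)
qed

lemma aut_comp: assumes "f \<in> aut X" "g \<in> aut X" shows "f \<circ> g \<in> aut X"
proof -
  have "bij_betw (f \<circ> g) (verts X) (verts X)"
    using assms unfolding aut_def by (auto intro: bij_betw_trans)
  moreover have "\<forall>x. x \<notin> verts X \<longrightarrow> (f \<circ> g) x = x" using aut_out[OF assms(1)] aut_out[OF assms(2)] by auto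
  moreover have "\<forall>u\<in>verts X. \<forall>v\<in>verts X. (u, v) \<in> arcs X \<longleftrightarrow> ((f \<circ> g) u, (f \<circ> g) v) \<in> arcs X"
    using assms aut_arcs aut_verts by (metis comp_apply)
  ultimately show ?thesis unfolding aut_def by auto
qed

lemma aut_inv: assumes "f \<in> aut X"
  shows "inv f \<in> aut X" "f \<circ> inv f = id" "inv f \<circ> f = id"
proof -
  have bj: "bij f" by (rule aut_bij[OF assms])
  show "f \<circ> inv f = id" using bj by (simp add: bij_is_surj surj_iff_all fun_eq_iff surj_f_inv_f)
  show "inv f \<circ> f = id" using bj by (simp add: bij_is_inj fun_eq_iff)
  have out: "inv f x = x" if "x \<notin> verts X" for x
    using aut_out[OF assms that] bj by (metis bij_inv_eq_iff)
  have inV: "inv f x \<in> verts X" if "x \<in> verts X" for x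
  proof (rule ccontr)
    assume "inv f x \<notin> verts X"
    hence "f (inv f x) = inv f x" using aut_out[OF assms] by auto
    hence "x = inv f x" using bj by (simp add: bij_is_surj surj_f_inv_f)
    thus False using that \<open>inv f x \<notin> verts X\<close> by simp
  qed
  have "bij_betw (inv f) (verts X) (verts X)"
    unfolding bij_betw_def
  proof
    show "inj_on (inv f) (verts X)" using bj by (meson bij_imp_bij_inv bij_is_inj inj_on_subset subset_UNIV)
    show "inv f ` verts X = verts X"
    proof
      show "inv f ` verts X \<subseteq> verts X" using inV by auto
      show "verts X \<subseteq> inv f ` verts X"
      proof
        fix y assume "y \<in> verts X"
        hence "f y \<in> verts X" "inv f (f y) = y" using aut_verts[OF assms] bj by (auto simp: bij_is_inj)
        thus "y \<in> inv f ` verts X" by (metis imageI)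
      qed
    qed
  qed
  moreover have "\<forall>u\<in>verts X. \<forall>v\<in>verts X. (u, v) \<in> arcs X \<longleftrightarrow> (inv f u, inv f v) \<in> arcs X"
  proof (intro ballI)
    fix u v assume uv: "u \<in> verts X" "v \<in> verts X"
    have "(inv f u, inv f v) \<in> arcs X \<longleftrightarrow> (f (inv f u), f (inv f v)) \<in> arcs X"
      using aut_arcs[OF assms] inV uv by auto
    also have "\<dots> \<longleftrightarrow> (u, v) \<in> arcs X" using bj by (simp add: bij_is_surj surj_f_inv_f)
    finally show "(u, v) \<in> arcs X \<longleftrightarrow> (inv f u, inv f v) \<in> arcs X" by simp
  qed
  ultimately show "inv f \<in> aut X" unfolding aut_def using out by auto
qed

lemma finite_aut: assumes "finite (verts X)" shows "finite (aut X)"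
proof -
  have "inj_on (\<lambda>f. restrict f (verts X)) (aut X)"
  proof (rule inj_onI)
    fix f g assume fg: "f \<in> aut X" "g \<in> aut X" "restrict f (verts X) = restrict g (verts X)"
    show "f = g"
    proof
      fix x show "f x = g x"
        using fg aut_out[of f X x] aut_out[of g X x] by (cases "x \<in> verts X") (auto dest: fun_cong[where x=x])
    qed
  qed
  moreover have "(\<lambda>f. restrict f (verts X)) ` aut X \<subseteq> verts X \<rightarrow>\<^sub>E verts X"
    using aut_verts by fastforce
  moreover have "finite (verts X \<rightarrow>\<^sub>E verts X)" using assms by (simp add: finite_PiE)
  ultimately show ?thesis by (meson finite_imageD finite_subset)
qed

definition proj :: "'a graph \<Rightarrow> 'b graph \<Rightarrow> ('b \<Rightarrow> 'a) \<Rightarrow> ('b \<Rightarrow> 'b) \<Rightarrow> ('a \<Rightarrow> 'a)" where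
  "proj X Y p h = (\<lambda>x. if x \<in> verts X then p (h (SOME y. y \<in> verts Y \<and> p y = x)) else x)"

definition stab :: "('b \<Rightarrow> 'b) set \<Rightarrow> 'b \<Rightarrow> ('b \<Rightarrow> 'b) set" where
  "stab H v = {h \<in> H. h v = v}"

definition Hom2 :: "('b \<Rightarrow> 'b) set \<Rightarrow> (('b \<Rightarrow> 'b) \<Rightarrow> bool) set" where
  "Hom2 H = {\<chi> \<in> extensional H. \<forall>x\<in>H. \<forall>y\<in>H. \<chi> (x \<circ> y) = (\<chi> x \<noteq> \<chi> y)}"

lemma restrict_eqD: "restrict f A = restrict g A \<Longrightarrow> x \<in> A \<Longrightarrow> f x = g x"
  by (metis restrict_apply')

lemma arc_transD: "arc_transitive X G \<Longrightarrow> (u, v) \<in> arcs X \<Longrightarrow> (u', v') \<in> arcs X \<Longrightarrow>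
   \<exists>g\<in>G. g u = u' \<and> g v = v'"
  unfolding arc_transitive_def by fast

lemma arc_transI: "(\<And>u v u' v'. (u, v) \<in> arcs X \<Longrightarrow> (u', v') \<in> arcs X \<Longrightarrow>
   \<exists>g\<in>G. g u = u' \<and> g v = v') \<Longrightarrow> arc_transitive X G"
  unfolding arc_transitive_def by auto

lemma graph_arcs: "graph X \<Longrightarrow> (u, v) \<in> arcs X \<Longrightarrow> u \<in> verts X \<and> v \<in> verts X"
  unfolding graph_def by auto

lemma pg_id: "perm_group H \<Longrightarrow> id \<in> H" unfolding perm_group_def by auto
lemma pg_comp: "perm_group H \<Longrightarrow> x \<in> H \<Longrightarrow> y \<in> H \<Longrightarrow> x \<circ> y \<in> H" unfolding perm_group_def by auto
lemma pg_inv: "perm_group H \<Longrightarrow> x \<in> H \<Longrightarrow> \<exists>y\<in>H. x \<circ> y = id \<and> y \<circ> x = id" unfolding perm_group_def by auto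

lemma hom_comp: "\<chi> \<in> Hom2 H \<Longrightarrow> x \<in> H \<Longrightarrow> y \<in> H \<Longrightarrow> \<chi> (x \<circ> y) = (\<chi> x \<noteq> \<chi> y)"
  unfolding Hom2_def by auto

lemma hom_id: assumes "perm_group H" "\<chi> \<in> Hom2 H" shows "\<chi> id = False"
  using hom_comp[OF assms(2) pg_id[OF assms(1)] pg_id[OF assms(1)]] by auto

lemma hom_inv: assumes "perm_group H" "\<chi> \<in> Hom2 H" "x \<in> H" "y \<in> H" "x \<circ> y = id"
  shows "\<chi> y = \<chi> x"
  using hom_comp[OF assms(2) assms(3) assms(4)] hom_id[OF assms(1,2)] assms(5) by auto

lemma hom_out: "\<chi> \<in> Hom2 H \<Longrightarrow> x \<notin> H \<Longrightarrow> \<chi> x = undefined"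
  unfolding Hom2_def extensional_def by auto

lemma finite_Hom2: "finite H \<Longrightarrow> finite (Hom2 H)"
proof -
  assume f: "finite H"
  have "Hom2 H \<subseteq> H \<rightarrow>\<^sub>E (UNIV :: bool set)" unfolding Hom2_def PiE_def by auto
  moreover have "finite (H \<rightarrow>\<^sub>E (UNIV :: bool set))" using f by (simp add: finite_PiE)
  ultimately show ?thesis by (rule finite_subset)
qed

lemma Hom2_nonempty: "perm_group H \<Longrightarrow> restrict (\<lambda>_. False) H \<in> Hom2 H"
  unfolding Hom2_def using pg_comp by auto

lemma hom_bound:
  fixes Y :: "'b graph" and H
  assumes gr: "graph Y" and con: "connected_graph Y" and Hsub: "H \<subseteq> aut Y" and pg: "perm_group H"
   and at: "arc_transitive Y H" and fin: "finite H" and sb: "\<forall>y\<in>verts Y. card (stab H y) \<le> B"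
  shows "card (Hom2 H) \<le> 2 * 2^B"
proof -
  obtain v where v: "v \<in> verts Y" using con unfolding connected_graph_def by auto
  have "\<exists>a\<in>H. \<forall>x. (v,x) \<in> arcs Y \<longrightarrow> (\<exists>h\<in>stab H v. h (a v) = x)"
  proof (cases "\<exists>w. (v,w) \<in> arcs Y")
    case True then obtain w where w: "(v,w) \<in> arcs Y" by auto
    have "(w,v) \<in> arcs Y" using gr w unfolding graph_def sym_def by blast
    then obtain a where a: "a \<in> H" "a v = w" "a w = v" using arc_transD[OF at w] by blast
    moreover have "\<exists>h\<in>stab H v. h (a v) = x" if "(v,x) \<in> arcs Y" for x
      using arc_transD[OF at w that] a(2) unfolding stab_def by auto
    ultimately show ?thesis by blast
  next
    case False then show ?thesis using pg_id[OF pg] by auto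
  qed
  then obtain a where a: "a \<in> H" "\<And>x. (v,x) \<in> arcs Y \<Longrightarrow> \<exists>h\<in>stab H v. h (a v) = x" by blast
  define \<Phi> where "\<Phi> = (\<lambda>\<chi>::('b\<Rightarrow>'b)\<Rightarrow>bool. (restrict \<chi> (stab H v), \<chi> a))"
  have inj: "inj_on \<Phi> (Hom2 H)"
  proof (rule inj_onI)
    fix \<chi>1 \<chi>2 assume c1: "\<chi>1 \<in> Hom2 H" and c2: "\<chi>2 \<in> Hom2 H" and e: "\<Phi> \<chi>1 = \<Phi> \<chi>2"
    define S where "S = {h \<in> H. \<chi>1 h = \<chi>2 h}"
    have stabS: "stab H v \<subseteq> S"
    proof
      fix h assume h: "h \<in> stab H v"
      have "restrict \<chi>1 (stab H v) = restrict \<chi>2 (stab H v)" using e unfolding \<Phi>_def by simp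
      from restrict_eqD[OF this h] h show "h \<in> S" unfolding S_def stab_def by auto
    qed
    have aS: "a \<in> S" using e a(1) unfolding \<Phi>_def S_def by auto
    have compS: "s \<circ> t \<in> S" if "s \<in> S" "t \<in> S" for s t
      using that hom_comp[OF c1] hom_comp[OF c2] pg_comp[OF pg] unfolding S_def by auto
    have invS: "\<exists>s'\<in>S. s \<circ> s' = id \<and> s' \<circ> s = id" if sS: "s \<in> S" for s
    proof -
      obtain s' where s': "s' \<in> H" "s \<circ> s' = id" "s' \<circ> s = id" using pg_inv[OF pg] sS unfolding S_def by blast
      have "\<chi>1 s' = \<chi>2 s'" using hom_inv[OF pg c1 _ s'(1) s'(2)] hom_inv[OF pg c2 _ s'(1) s'(2)] that
        unfolding S_def by auto
      thus ?thesis using s' unfolding S_def by auto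
    qed
    have idS: "id \<in> S" using stabS pg_id[OF pg] unfolding stab_def by auto
    have orbit: "\<exists>s\<in>S. s v = u" if "(v,u) \<in> (arcs Y)\<^sup>*" for u
      using that
    proof (induction rule: rtrancl_induct)
      case base thus ?case using idS by (metis id_apply)
    next
      case (step u u')
      then obtain s where s: "s \<in> S" "s v = u" by blast
      obtain s' where s': "s' \<in> S" "s \<circ> s' = id" "s' \<circ> s = id" using invS[OF s(1)] by blast
      have s'a: "s' \<in> aut Y" using s'(1) Hsub unfolding S_def by auto
      have uu: "u \<in> verts Y" "u' \<in> verts Y" using graph_arcs[OF gr step(2)] by auto
      have "(s' u, s' u') \<in> arcs Y" using aut_arcs[OF s'a uu] step(2) by simp
      moreover have "s' u = v" using s(2) s'(3) by (metis comp_apply id_apply)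
      ultimately have "(v, s' u') \<in> arcs Y" by simp
      then obtain h where h: "h \<in> stab H v" "h (a v) = s' u'" using a(2) by blast
      have "s \<circ> h \<circ> a \<in> S" using compS s(1) stabS h(1) aS by blast
      moreover have "(s \<circ> h \<circ> a) v = u'" using h(2) s'(2) by (metis comp_apply id_apply)
      ultimately show ?case by blast
    qed
    have HS: "H \<subseteq> S"
    proof
      fix h assume h: "h \<in> H"
      have "h v \<in> verts Y" using aut_verts[of h Y v] h Hsub v by auto
      hence "(v, h v) \<in> (arcs Y)\<^sup>*" using con v unfolding connected_graph_def by auto
      then obtain s where s: "s \<in> S" "s v = h v" using orbit by blast
      obtain s' where s': "s' \<in> S" "s \<circ> s' = id" "s' \<circ> s = id" using invS[OF s(1)] by blast
      have "s' \<circ> h \<in> H" using pg_comp[OF pg] s'(1) h unfolding S_def by auto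
      moreover have "(s' \<circ> h) v = v" using s(2) s'(3) by (metis comp_apply id_apply)
      ultimately have "s' \<circ> h \<in> S" using stabS unfolding stab_def by auto
      hence "s \<circ> (s' \<circ> h) \<in> S" using compS s(1) by blast
      moreover have "s \<circ> (s' \<circ> h) = h" using s'(2) by (simp add: comp_assoc[symmetric])
      ultimately show "h \<in> S" by simp
    qed
    show "\<chi>1 = \<chi>2"
    proof
      fix x show "\<chi>1 x = \<chi>2 x"
        using HS hom_out[OF c1, of x] hom_out[OF c2, of x] unfolding S_def by (cases "x \<in> H") auto
    qed
  qed
  have fs: "finite (stab H v)" using fin unfolding stab_def by auto
  have "\<Phi> ` Hom2 H \<subseteq> (stab H v \<rightarrow>\<^sub>E (UNIV::bool set)) \<times> UNIV" unfolding \<Phi>_def by auto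
  moreover have "finite ((stab H v \<rightarrow>\<^sub>E (UNIV::bool set)) \<times> (UNIV :: bool set))"
    using fs by (simp add: finite_PiE)
  ultimately have "card (\<Phi> ` Hom2 H) \<le> card ((stab H v \<rightarrow>\<^sub>E (UNIV::bool set)) \<times> (UNIV :: bool set))"
    by (rule card_mono[rotated])
  also have "\<dots> = 2 ^ card (stab H v) * 2" using fs by (simp add: card_cartesian_product card_funcsetE)
  also have "\<dots> \<le> 2 ^ B * 2" using sb v by simp
  finally show ?thesis using card_image[OF inj] by simp
qed

lemma proj_lift: assumes "covering Y X p" "is_lift Y p g h" "g \<in> aut X"
  shows "proj X Y p h = g"
proof
  fix x show "proj X Y p h x = g x"
  proof (cases "x \<in> verts X")
    case True
    have "x \<in> p ` verts Y" using assms(1) True unfolding covering_def by auto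
    then obtain y where "y \<in> verts Y" "p y = x" by blast
    hence "(SOME y. y \<in> verts Y \<and> p y = x) \<in> verts Y \<and> p (SOME y. y \<in> verts Y \<and> p y = x) = x"
      by (metis (mono_tags, lifting) someI)
    then show ?thesis using assms(2) True unfolding is_lift_def proj_def by auto
  next
    case False thus ?thesis using aut_out[OF assms(3)] unfolding proj_def by simp
  qed
qed

locale cstep =
  fixes X :: "'a graph" and G :: "('a \<Rightarrow> 'a) set" and Y :: "'b graph" and p :: "'b \<Rightarrow> 'a"
  assumes two: "two_cover Y X p" and Gsub: "G \<subseteq> aut X" and Gpg: "perm_group G"
    and lifts: "\<forall>g\<in>G. \<exists>g'. is_lift Y p g g'"
begin

abbreviation "L \<equiv> lift_group Y p G"
abbreviation "K \<equiv> CT Y p"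

lemma cov: "covering Y X p" using two unfolding two_cover_def regular_covering_def by auto

lemma reg: assumes "y \<in> verts Y" "y' \<in> verts Y" "p y = p y'" shows "\<exists>!c. c \<in> K \<and> c y = y'"
proof -
  have "\<forall>y\<in>verts Y. \<forall>y'\<in>verts Y. p y = p y' \<longrightarrow> (\<exists>!c. c \<in> CT Y p \<and> c y = y')"
    using two unfolding two_cover_def regular_covering_def by blast
  thus ?thesis using assms by blast
qed

lemma cov_arc: "(u, v) \<in> arcs Y \<Longrightarrow> (p u, p v) \<in> arcs X"
  using cov unfolding covering_def by blast

lemma cov_inj: "y \<in> verts Y \<Longrightarrow> inj_on p (nbhd Y y)"
  using cov unfolding covering_def bij_betw_def by blast

lemma pV: "y \<in> verts Y \<Longrightarrow> p y \<in> verts X" using cov unfolding covering_def by auto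

lemma grY: "graph Y" and conY: "connected_graph Y" using cov unfolding covering_def by auto

lemma L_aut: "h \<in> L \<Longrightarrow> h \<in> aut Y" unfolding lift_group_def is_lift_def by auto

lemma L_proj: assumes "h \<in> L" shows "proj X Y p h \<in> G" "is_lift Y p (proj X Y p h) h"
proof -
  obtain g where g: "g \<in> G" "is_lift Y p g h" using assms unfolding lift_group_def by auto
  have ga: "g \<in> aut X" using g(1) Gsub by blast
  have "proj X Y p h = g" by (rule proj_lift[OF cov g(2) ga])
  thus "proj X Y p h \<in> G" "is_lift Y p (proj X Y p h) h" using g by auto
qed

lemma lift_L: "g \<in> G \<Longrightarrow> is_lift Y p g h \<Longrightarrow> h \<in> L" unfolding lift_group_def by auto

lemma proj_eq: assumes "g \<in> G" "is_lift Y p g h" shows "proj X Y p h = g"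
proof -
  have ga: "g \<in> aut X" using assms(1) Gsub by blast
  show ?thesis by (rule proj_lift[OF cov assms(2) ga])
qed

lemma comp_lift: assumes "is_lift Y p g h" "is_lift Y p g' h'"
  shows "is_lift Y p (g \<circ> g') (h \<circ> h')"
  unfolding is_lift_def
proof (intro conjI ballI)
  have ha: "h \<in> aut Y" and ha': "h' \<in> aut Y" using assms unfolding is_lift_def by auto
  show "h \<circ> h' \<in> aut Y" by (rule aut_comp[OF ha ha'])
  fix y assume y: "y \<in> verts Y"
  have "h' y \<in> verts Y" by (rule aut_verts[OF ha' y])
  then show "p ((h \<circ> h') y) = (g \<circ> g') (p y)" using assms y unfolding is_lift_def by auto
qed

lemma id_lift: "is_lift Y p id id" unfolding is_lift_def using id_aut by auto

lemma id_L: "id \<in> L" by (rule lift_L[OF pg_id[OF Gpg] id_lift])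

lemma L_comp: assumes "h \<in> L" "h' \<in> L"
  shows "h \<circ> h' \<in> L" "proj X Y p (h \<circ> h') = proj X Y p h \<circ> proj X Y p h'"
proof -
  have l: "is_lift Y p (proj X Y p h \<circ> proj X Y p h') (h \<circ> h')"
    by (rule comp_lift[OF L_proj(2)[OF assms(1)] L_proj(2)[OF assms(2)]])
  have gG: "proj X Y p h \<circ> proj X Y p h' \<in> G" by (rule pg_comp[OF Gpg L_proj(1)[OF assms(1)] L_proj(1)[OF assms(2)]])
  show "h \<circ> h' \<in> L" by (rule lift_L[OF gG l])
  show "proj X Y p (h \<circ> h') = proj X Y p h \<circ> proj X Y p h'" by (rule proj_eq[OF gG l])
qed

lemma L_inv: assumes "h \<in> L" shows "inv h \<in> L"
proof -
  define g where "g = proj X Y p h"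
  have g: "g \<in> G" "is_lift Y p g h" using L_proj assms unfolding g_def by auto
  obtain g2 where g2: "g2 \<in> G" "g \<circ> g2 = id" "g2 \<circ> g = id" using pg_inv[OF Gpg g(1)] by blast
  have ha: "h \<in> aut Y" using L_aut assms by auto
  have "is_lift Y p g2 (inv h)"
    unfolding is_lift_def
  proof (intro conjI ballI)
    show "inv h \<in> aut Y" using aut_inv[OF ha] by auto
    fix y assume y: "y \<in> verts Y"
    have iy: "inv h y \<in> verts Y" by (rule aut_verts[OF aut_inv(1)[OF ha] y])
    have "p (inv h y) = g2 (g (p (inv h y)))" using g2(3) by (metis comp_apply id_apply)
    also have "g (p (inv h y)) = p (h (inv h y))" using g(2) iy unfolding is_lift_def by auto
    also have "h (inv h y) = y" using aut_inv(2)[OF ha] by (metis comp_apply id_apply)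
    finally show "p (inv h y) = g2 (p y)" .
  qed
  thus ?thesis using lift_L g2(1) by auto
qed

lemma pgL: "perm_group L"
  unfolding perm_group_def
proof (intro conjI ballI)
  show "id \<in> L" by (rule id_L)
  fix f assume f: "f \<in> L"
  show "\<exists>g\<in>L. f \<circ> g = id \<and> g \<circ> f = id"
  proof (rule bexI[of _ "inv f"])
    show "inv f \<in> L" by (rule L_inv[OF f])
    show "f \<circ> inv f = id \<and> inv f \<circ> f = id" using aut_inv(2,3)[OF L_aut[OF f]] by simp
  qed
next
  fix f g assume "f \<in> L" "g \<in> L"
  thus "f \<circ> g \<in> L" by (rule L_comp(1))
qed

lemma finL: "finite L"
proof -
  have "finite (aut Y)" using finite_aut grY unfolding graph_def by auto
  thus ?thesis using L_aut by (meson finite_subset subsetI)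
qed

lemma K_iff: "c \<in> K \<longleftrightarrow> c \<in> aut Y \<and> (\<forall>y\<in>verts Y. p (c y) = p y)"
  unfolding CT_def by auto

lemma K_L: assumes "c \<in> K" shows "c \<in> L" "proj X Y p c = id"
proof -
  have l: "is_lift Y p id c" using assms unfolding K_iff is_lift_def by auto
  show "c \<in> L" by (rule lift_L[OF pg_id[OF Gpg] l])
  show "proj X Y p c = id" by (rule proj_eq[OF pg_id[OF Gpg] l])
qed

lemma id_K: "id \<in> K" using id_aut unfolding K_iff by auto

lemma K_comp: assumes c: "c \<in> K" and d: "d \<in> K" shows "c \<circ> d \<in> K"
proof -
  have ca: "c \<in> aut Y" and cp: "\<forall>y\<in>verts Y. p (c y) = p y" using c unfolding K_iff by auto
  have da: "d \<in> aut Y" and dp: "\<forall>y\<in>verts Y. p (d y) = p y" using d unfolding K_iff by auto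
  have "\<forall>y\<in>verts Y. p ((c \<circ> d) y) = p y"
  proof
    fix y assume y: "y \<in> verts Y"
    have "d y \<in> verts Y" by (rule aut_verts[OF da y])
    thus "p ((c \<circ> d) y) = p y" using cp dp y by simp
  qed
  thus ?thesis unfolding K_iff using aut_comp[OF ca da] by simp
qed

lemma exc: "\<exists>c. c \<in> K \<and> c \<noteq> id \<and> K = {id, c}"
proof -
  have "card K = 2" using two unfolding two_cover_def by auto
  then obtain a b where ab: "K = {a, b}" "a \<noteq> b" by (meson card_2_iff)
  show ?thesis
  proof (cases "a = id")
    case True thus ?thesis using ab by auto
  next
    case False
    hence "b = id" using id_K ab by auto
    thus ?thesis using ab False by auto
  qed
qed

definition "cc = (SOME c. c \<in> K \<and> c \<noteq> id \<and> K = {id, c})"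

lemma cc: "cc \<in> K" "cc \<noteq> id" "K = {id, cc}"
  using someI_ex[OF exc] unfolding cc_def by auto

lemma cc_cc: "cc \<circ> cc = id"
proof -
  have "cc \<circ> cc \<in> K" by (rule K_comp[OF cc(1) cc(1)])
  moreover have "cc \<circ> cc \<noteq> cc"
  proof
    assume e: "cc \<circ> cc = cc"
    have "bij cc" using aut_bij cc(1) unfolding K_iff by auto
    hence ij: "inj cc" by (rule bij_is_inj)
    have "cc x = x" for x
    proof -
      have "cc (cc x) = cc x" using fun_cong[OF e, of x] by simp
      thus ?thesis using ij by (simp add: inj_eq)
    qed
    hence "cc = id" by auto
    thus False using cc by auto
  qed
  ultimately show ?thesis using cc(3) by auto
qed

lemma central: assumes "h \<in> L" shows "h \<circ> cc = cc \<circ> h"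
proof -
  define g where "g = proj X Y p h"
  have g: "g \<in> G" "is_lift Y p g h" using L_proj assms unfolding g_def by auto
  have ha: "h \<in> aut Y" using L_aut assms by auto
  have ca: "cc \<in> aut Y" using cc(1) unfolding K_iff by auto
  define d where "d = h \<circ> cc \<circ> inv h"
  have da: "d \<in> aut Y" unfolding d_def by (rule aut_comp[OF aut_comp[OF ha ca] aut_inv(1)[OF ha]])
  have "\<forall>y\<in>verts Y. p (d y) = p y"
  proof
    fix y assume y: "y \<in> verts Y"
    have iy: "inv h y \<in> verts Y" by (rule aut_verts[OF aut_inv(1)[OF ha] y])
    have ciy: "cc (inv h y) \<in> verts Y" by (rule aut_verts[OF ca iy])
    have "p (d y) = g (p (cc (inv h y)))" using g(2) ciy unfolding d_def is_lift_def by auto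
    also have "p (cc (inv h y)) = p (inv h y)" using cc(1) iy unfolding K_iff by auto
    also have "g (p (inv h y)) = p (h (inv h y))" using g(2) iy unfolding is_lift_def by auto
    also have "h (inv h y) = y" using aut_inv(2)[OF ha] by (metis comp_apply id_apply)
    finally show "p (d y) = p y" .
  qed
  hence dK: "d \<in> K" using da unfolding K_iff by auto
  have "d \<noteq> id"
  proof
    assume d1: "d = id"
    have "cc = (inv h \<circ> h) \<circ> cc \<circ> (inv h \<circ> h)" using aut_inv(3)[OF ha] by simp
    also have "\<dots> = inv h \<circ> d \<circ> h" unfolding d_def by (simp add: comp_assoc)
    also have "\<dots> = id" using d1 aut_inv(3)[OF ha] by simp
    finally show False using cc by auto
  qed
  hence "d = cc" using dK cc(3) by auto
  hence "d \<circ> h = cc \<circ> h" by simp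
  moreover have "d \<circ> h = h \<circ> cc \<circ> (inv h \<circ> h)" unfolding d_def by (simp add: comp_assoc)
  moreover have "h \<circ> cc \<circ> (inv h \<circ> h) = h \<circ> cc" using aut_inv(3)[OF ha] by simp
  ultimately show ?thesis by simp
qed

lemma arcL: assumes "arc_transitive X G" shows "arc_transitive Y L"
proof (rule arc_transI)
  fix y1 y2 y1' y2' assume a1: "(y1, y2) \<in> arcs Y" and a2: "(y1', y2') \<in> arcs Y"
  have v: "y1 \<in> verts Y" "y2 \<in> verts Y" "y1' \<in> verts Y" "y2' \<in> verts Y"
    using graph_arcs[OF grY a1] graph_arcs[OF grY a2] by simp_all
  have x1: "(p y1, p y2) \<in> arcs X" by (rule cov_arc[OF a1])
  have x2: "(p y1', p y2') \<in> arcs X" by (rule cov_arc[OF a2])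
  have "\<exists>g\<in>G. g (p y1) = p y1' \<and> g (p y2) = p y2'" by (rule arc_transD[OF assms x1 x2])
  then obtain g where g: "g \<in> G" "g (p y1) = p y1'" "g (p y2) = p y2'" by blast
  obtain h where h: "is_lift Y p g h" using lifts g(1) by auto
  have ha: "h \<in> aut Y" using h unfolding is_lift_def by auto
  have hy1: "h y1 \<in> verts Y" by (rule aut_verts[OF ha v(1)])
  have "p (h y1) = p y1'" using h v(1) g(2) unfolding is_lift_def by auto
  hence "\<exists>c. c \<in> K \<and> c (h y1) = y1'" by (rule ex1_implies_ex[OF reg[OF hy1 v(3)]])
  then obtain c where c: "c \<in> K" "c (h y1) = y1'" by blast
  have ca: "c \<in> aut Y" using c(1) unfolding K_iff by auto
  have "c \<circ> h \<in> L" by (rule L_comp(1)[OF K_L(1)[OF c(1)] lift_L[OF g(1) h]])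
  moreover have "(c \<circ> h) y1 = y1'" using c(2) by simp
  moreover have "(c \<circ> h) y2 = y2'"
  proof -
    have hy2: "h y2 \<in> verts Y" by (rule aut_verts[OF ha v(2)])
    have "(h y1, h y2) \<in> arcs Y" using aut_arcs[OF ha v(1) v(2)] a1 by simp
    hence "(c (h y1), c (h y2)) \<in> arcs Y" using aut_arcs[OF ca hy1 hy2] by simp
    hence n1: "c (h y2) \<in> nbhd Y y1'" using c(2) unfolding nbhd_def by simp
    have n2: "y2' \<in> nbhd Y y1'" using a2 unfolding nbhd_def by simp
    have "p (c (h y2)) = p (h y2)" using c(1) hy2 unfolding K_iff by auto
    also have "\<dots> = p y2'" using h v(2) g(3) unfolding is_lift_def by auto
    finally have pe: "p (c (h y2)) = p y2'" .
    have ij: "inj_on p (nbhd Y y1')" by (rule cov_inj[OF v(3)])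
    have "c (h y2) = y2'" by (rule inj_onD[OF ij pe n1 n2])
    thus ?thesis by simp
  qed
  ultimately show "\<exists>g\<in>L. g y1 = y1' \<and> g y2 = y2'" by blast
qed

lemma stab_le: assumes "finite G" "y \<in> verts Y"
  shows "card (stab L y) \<le> card (stab G (p y))"
proof -
  have "inj_on (proj X Y p) (stab L y)"
  proof (rule inj_onI)
    fix h1 h2 assume h1: "h1 \<in> stab L y" and h2: "h2 \<in> stab L y" and e: "proj X Y p h1 = proj X Y p h2"
    define g where "g = proj X Y p h1"
    have h1L: "h1 \<in> L" and h2L: "h2 \<in> L" using h1 h2 unfolding stab_def by auto
    have l1: "is_lift Y p g h1" unfolding g_def by (rule L_proj(2)[OF h1L])
    have l2: "is_lift Y p g h2" unfolding g_def e by (rule L_proj(2)[OF h2L])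
    have a1: "h1 \<in> aut Y" and a2: "h2 \<in> aut Y" using l1 l2 unfolding is_lift_def by auto
    define d where "d = h1 \<circ> inv h2"
    have da: "d \<in> aut Y" unfolding d_def by (rule aut_comp[OF a1 aut_inv(1)[OF a2]])
    have "\<forall>z\<in>verts Y. p (d z) = p z"
    proof
      fix z assume z: "z \<in> verts Y"
      have iz: "inv h2 z \<in> verts Y" by (rule aut_verts[OF aut_inv(1)[OF a2] z])
      have "p (d z) = g (p (inv h2 z))" using l1 iz unfolding d_def is_lift_def by auto
      also have "\<dots> = p (h2 (inv h2 z))" using l2 iz unfolding is_lift_def by auto
      also have "h2 (inv h2 z) = z" using aut_inv(2)[OF a2] by (metis comp_apply id_apply)
      finally show "p (d z) = p z" .
    qed
    hence dK: "d \<in> K" using da unfolding K_iff by auto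
    have h2y: "h2 y = y" using h2 unfolding stab_def by auto
    have "inv h2 (h2 y) = y" using fun_cong[OF aut_inv(3)[OF a2], of y] by simp
    hence "inv h2 y = y" using h2y by simp
    hence dy: "d y = y" using h1 unfolding d_def stab_def by auto
    have u: "\<exists>!c. c \<in> K \<and> c y = y" by (rule reg[OF assms(2) assms(2) refl])
    have "(THE c. c \<in> K \<and> c y = y) = d" by (rule the1_equality[OF u], rule conjI[OF dK dy])
    moreover have "(THE c. c \<in> K \<and> c y = y) = id" by (rule the1_equality[OF u], rule conjI[OF id_K], simp)
    ultimately have "d = id" by simp
    hence "d \<circ> h2 = h2" by simp
    moreover have "d \<circ> h2 = h1 \<circ> (inv h2 \<circ> h2)" unfolding d_def by (simp add: comp_assoc)
    moreover have "h1 \<circ> (inv h2 \<circ> h2) = h1" using aut_inv(3)[OF a2] by simp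
    ultimately show "h1 = h2" by simp
  qed
  moreover have "proj X Y p ` stab L y \<subseteq> stab G (p y)"
  proof
    fix g assume "g \<in> proj X Y p ` stab L y"
    then obtain h where h: "h \<in> stab L y" "g = proj X Y p h" by auto
    have "g \<in> G" "is_lift Y p g h" using L_proj h unfolding stab_def by auto
    hence "g (p y) = p (h y)" using assms(2) unfolding is_lift_def by auto
    thus "g \<in> stab G (p y)" using h \<open>g \<in> G\<close> unfolding stab_def by auto
  qed
  moreover have "finite (stab G (p y))" using assms(1) unfolding stab_def by auto
  ultimately show ?thesis by (meson card_inj_on_le)
qed

lemma doubling: assumes hc: "has_complement L K"
  shows "2 * card (Hom2 G) \<le> card (Hom2 L)"
proof -
  obtain C where C: "C \<subseteq> L" "perm_group C" "C \<inter> K = {id}" "\<forall>g\<in>L. \<exists>h\<in>C. \<exists>k\<in>K. g = h \<circ> k"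
    using hc unfolding has_complement_def by blast
  have ccC: "a \<circ> cc \<notin> C" if a: "a \<in> C" for a
  proof
    assume ac: "a \<circ> cc \<in> C"
    obtain a' where a': "a' \<in> C" "a \<circ> a' = id" "a' \<circ> a = id" using pg_inv[OF C(2) a] by blast
    have "a' \<circ> (a \<circ> cc) \<in> C" by (rule pg_comp[OF C(2) a'(1) ac])
    moreover have "a' \<circ> (a \<circ> cc) = cc" using a'(3) by (simp add: comp_assoc[symmetric])
    ultimately have "cc \<in> C" by simp
    hence "cc \<in> C \<inter> K" using cc(1) by simp
    thus False using C(3) cc(2) by simp
  qed
  have decomp: "\<exists>a\<in>C. h = a \<circ> cc" if hh: "h \<in> L" "h \<notin> C" for h
  proof -
    obtain a k where ak: "a \<in> C" "k \<in> K" "h = a \<circ> k" using C(4) hh(1) by blast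
    have "k = id \<or> k = cc" using ak(2) cc(3) by auto
    thus ?thesis using ak hh(2) by auto
  qed
  have CL: "a \<in> C \<Longrightarrow> a \<in> L" for a using C(1) by auto
  have ccL: "cc \<in> L" by (rule K_L(1)[OF cc(1)])
  have psi: "(h1 \<circ> h2 \<notin> C) = ((h1 \<notin> C) \<noteq> (h2 \<notin> C))" if h: "h1 \<in> L" "h2 \<in> L" for h1 h2
  proof (cases "h1 \<in> C"; cases "h2 \<in> C")
    assume "h1 \<in> C" "h2 \<in> C" thus ?thesis using pg_comp[OF C(2)] by auto
  next
    assume a: "h1 \<in> C" "h2 \<notin> C"
    then obtain a2 where a2: "a2 \<in> C" "h2 = a2 \<circ> cc" using decomp h by blast
    have "h1 \<circ> h2 = (h1 \<circ> a2) \<circ> cc" using a2 by (simp add: comp_assoc)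
    moreover have "h1 \<circ> a2 \<in> C" by (rule pg_comp[OF C(2) a(1) a2(1)])
    ultimately show ?thesis using ccC a by auto
  next
    assume a: "h1 \<notin> C" "h2 \<in> C"
    then obtain a1 where a1: "a1 \<in> C" "h1 = a1 \<circ> cc" using decomp h by blast
    have "h1 \<circ> h2 = a1 \<circ> (cc \<circ> h2)" using a1 by (simp add: comp_assoc)
    also have "cc \<circ> h2 = h2 \<circ> cc" by (rule central[OF CL[OF a(2)], symmetric])
    finally have "h1 \<circ> h2 = (a1 \<circ> h2) \<circ> cc" by (simp only: comp_assoc)
    moreover have "a1 \<circ> h2 \<in> C" by (rule pg_comp[OF C(2) a1(1) a(2)])
    ultimately show ?thesis using ccC a by auto
  next
    assume a: "h1 \<notin> C" "h2 \<notin> C"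
    obtain a1 where a1: "a1 \<in> C" "h1 = a1 \<circ> cc" using decomp h a by blast
    obtain a2 where a2: "a2 \<in> C" "h2 = a2 \<circ> cc" using decomp h a by blast
    have "h1 \<circ> h2 = a1 \<circ> (cc \<circ> a2) \<circ> cc" using a1 a2 by (simp add: comp_assoc)
    also have "cc \<circ> a2 = a2 \<circ> cc" by (rule central[OF CL[OF a2(1)], symmetric])
    finally have "h1 \<circ> h2 = a1 \<circ> a2 \<circ> (cc \<circ> cc)" by (simp only: comp_assoc)
    hence "h1 \<circ> h2 = a1 \<circ> a2" using cc_cc by simp
    moreover have "a1 \<circ> a2 \<in> C" by (rule pg_comp[OF C(2) a1(1) a2(1)])
    ultimately show ?thesis using a by auto
  qed
  define \<Phi> where "\<Phi> = (\<lambda>(\<chi>::('a\<Rightarrow>'a)\<Rightarrow>bool, b::bool). restrict (\<lambda>h. \<chi> (proj X Y p h) \<noteq> (b \<and> h \<notin> C)) L)"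
  have into: "\<Phi> (\<chi>, b) \<in> Hom2 L" if \<chi>: "\<chi> \<in> Hom2 G" for \<chi> b
    unfolding Hom2_def
  proof (intro CollectI conjI ballI)
    show "\<Phi> (\<chi>, b) \<in> extensional L" unfolding \<Phi>_def by simp
    fix h1 h2 assume h: "h1 \<in> L" "h2 \<in> L"
    have hL: "h1 \<circ> h2 \<in> L" by (rule L_comp(1)[OF h])
    have pe: "proj X Y p (h1 \<circ> h2) = proj X Y p h1 \<circ> proj X Y p h2" by (rule L_comp(2)[OF h])
    have he: "\<chi> (proj X Y p h1 \<circ> proj X Y p h2) = (\<chi> (proj X Y p h1) \<noteq> \<chi> (proj X Y p h2))"
      by (rule hom_comp[OF \<chi> L_proj(1)[OF h(1)] L_proj(1)[OF h(2)]])
    have e0: "\<Phi> (\<chi>, b) h = (\<chi> (proj X Y p h) \<noteq> (b \<and> h \<notin> C))" if "h \<in> L" for h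
      unfolding \<Phi>_def using that by simp
    have bl: "\<And>A B x y. ((A \<noteq> B) \<noteq> (b \<and> (x \<noteq> y))) = ((A \<noteq> (b \<and> x)) \<noteq> (B \<noteq> (b \<and> y)))"
      by auto
    show "\<Phi> (\<chi>, b) (h1 \<circ> h2) = (\<Phi> (\<chi>, b) h1 \<noteq> \<Phi> (\<chi>, b) h2)"
      unfolding e0[OF hL] e0[OF h(1)] e0[OF h(2)] pe he psi[OF h] by (rule bl)
  qed
  have ccnC: "cc \<notin> C" using C(3) cc(1) cc(2) by auto
  have inj: "inj_on \<Phi> (Hom2 G \<times> UNIV)"
  proof (rule inj_onI, clarify)
    fix \<chi>1 b1 \<chi>2 b2 assume c1: "\<chi>1 \<in> Hom2 G" and c2: "\<chi>2 \<in> Hom2 G" and e: "\<Phi> (\<chi>1, b1) = \<Phi> (\<chi>2, b2)"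
    have ev: "\<chi>1 (proj X Y p h) \<noteq> (b1 \<and> h \<notin> C) \<longleftrightarrow> \<chi>2 (proj X Y p h) \<noteq> (b2 \<and> h \<notin> C)" if "h \<in> L" for h
      using fun_cong[OF e, of h] that unfolding \<Phi>_def by simp
    have "b1 = b2" using ev[OF ccL] K_L(2)[OF cc(1)] hom_id[OF Gpg c1] hom_id[OF Gpg c2] ccnC by simp
    moreover have "\<chi>1 = \<chi>2"
    proof
      fix g show "\<chi>1 g = \<chi>2 g"
      proof (cases "g \<in> G")
        case True
        obtain h where h: "is_lift Y p g h" using lifts True by auto
        have hL: "h \<in> L" by (rule lift_L[OF True h])
        have "proj X Y p h = g" by (rule proj_eq[OF True h])
        thus ?thesis using ev[OF hL] \<open>b1 = b2\<close> by auto
      next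
        case False thus ?thesis using hom_out[OF c1 False] hom_out[OF c2 False] by simp
      qed
    qed
    ultimately show "\<chi>1 = \<chi>2 \<and> b1 = b2" by simp
  qed
  have "\<Phi> ` (Hom2 G \<times> UNIV) \<subseteq> Hom2 L" using into by auto
  hence "card (\<Phi> ` (Hom2 G \<times> UNIV)) \<le> card (Hom2 L)"
    using finite_Hom2[OF finL] by (simp add: card_mono)
  moreover have "card (\<Phi> ` (Hom2 G \<times> UNIV)) = card (Hom2 G) * 2"
    using card_image[OF inj] by (simp add: card_cartesian_product)
  ultimately show ?thesis by simp
qed

end

lemma step_props:
  fixes X :: "'a graph" and Y :: "'b graph"
  assumes st: "split_step X G Y p" and Gsub: "G \<subseteq> aut X" and Gpg: "perm_group G"
    and at: "arc_transitive X G" and fG: "finite G" and sb: "\<forall>x\<in>verts X. card (stab G x) \<le> B"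
  shows "graph Y \<and> connected_graph Y \<and> lift_group Y p G \<subseteq> aut Y \<and> perm_group (lift_group Y p G)
    \<and> arc_transitive Y (lift_group Y p G) \<and> finite (lift_group Y p G)
    \<and> (\<forall>y\<in>verts Y. card (stab (lift_group Y p G) y) \<le> B)
    \<and> 2 * card (Hom2 G) \<le> card (Hom2 (lift_group Y p G))"
proof -
  have s1: "two_cover Y X p" and s2: "\<forall>g\<in>G. \<exists>g'. is_lift Y p g g'"
    and hc: "has_complement (lift_group Y p G) (CT Y p)"
    using st unfolding split_step_def by auto
  interpret cstep X G Y p by (rule cstep.intro[OF s1 Gsub Gpg s2])
  have "\<forall>y\<in>verts Y. card (stab L y) \<le> B"
  proof
    fix y assume y: "y \<in> verts Y"
    have "card (stab L y) \<le> card (stab G (p y))" by (rule stab_le[OF fG y])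
    also have "\<dots> \<le> B" using sb pV[OF y] by auto
    finally show "card (stab L y) \<le> B" .
  qed
  moreover have "L \<subseteq> aut Y" using L_aut by blast
  ultimately show ?thesis by (intro conjI grY conY pgL arcL[OF at] finL doubling[OF hc])
qed

lemma chain_bound:
  fixes Y :: "nat graph"
  assumes "split_chain_nat Y H m" "graph Y" "connected_graph Y" "H \<subseteq> aut Y" "perm_group H"
    "arc_transitive Y H" "finite H" "\<forall>y\<in>verts Y. card (stab H y) \<le> B"
  shows "2 ^ m * card (Hom2 H) \<le> 2 * 2 ^ B"
  using assms
proof (induction m arbitrary: Y H)
  case 0
  thus ?case using hom_bound[of Y H B] by simp
next
  case (Suc m)
  obtain Y' :: "nat graph" and p where st: "split_step Y H Y' p" and ch: "split_chain_nat Y' (lift_group Y' p H) m"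
    using Suc.prems(1) by auto
  have P: "graph Y' \<and> connected_graph Y' \<and> lift_group Y' p H \<subseteq> aut Y' \<and> perm_group (lift_group Y' p H)
    \<and> arc_transitive Y' (lift_group Y' p H) \<and> finite (lift_group Y' p H)
    \<and> (\<forall>y\<in>verts Y'. card (stab (lift_group Y' p H) y) \<le> B)
    \<and> 2 * card (Hom2 H) \<le> card (Hom2 (lift_group Y' p H))"
    using step_props[OF st Suc.prems(4) Suc.prems(5) Suc.prems(6) Suc.prems(7) Suc.prems(8)] .
  have P1: "graph Y'" and P2: "connected_graph Y'" and P3: "lift_group Y' p H \<subseteq> aut Y'"
    and P4: "perm_group (lift_group Y' p H)" and P5: "arc_transitive Y' (lift_group Y' p H)"
    and P6: "finite (lift_group Y' p H)" and P7: "\<forall>y\<in>verts Y'. card (stab (lift_group Y' p H) y) \<le> B"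
    using P by simp_all
  have IH: "2 ^ m * card (Hom2 (lift_group Y' p H)) \<le> 2 * 2 ^ B"
    by (rule Suc.IH[OF ch P1 P2 P3 P4 P5 P6 P7])
  have "2 ^ Suc m * card (Hom2 H) = 2 ^ m * (2 * card (Hom2 H))" by simp
  also have "\<dots> \<le> 2 ^ m * card (Hom2 (lift_group Y' p H))" using P by simp
  finally show ?case using IH by linarith
qed

theorem proposition5p1:
  fixes X :: "'a graph" and G :: "('a \<Rightarrow> 'a) set"
  assumes "graph X" and "connected_graph X" and "symmetric_graph X"
    and "aut_subgroup X G" and "arc_transitive X G"
  shows "split_length_finite X G"
proof -
  have Gsub: "G \<subseteq> aut X" and Gpg: "perm_group G" using assms(4) unfolding aut_subgroup_def by auto
  have fG: "finite G" using finite_aut[of X] assms(1) Gsub unfolding graph_def by (meson finite_subset)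
  define B where "B = card G"
  have sb: "\<forall>x\<in>verts X. card (stab G x) \<le> B"
  proof
    fix x assume "x \<in> verts X"
    have "stab G x \<subseteq> G" unfolding stab_def by auto
    thus "card (stab G x) \<le> B" unfolding B_def by (rule card_mono[OF fG])
  qed
  have "{n. split_admissible_chain X G n} \<subseteq> {..Suc (Suc B)}"
  proof
    fix n assume "n \<in> {n. split_admissible_chain X G n}"
    hence "n = 0 \<or> (\<exists>m (Y :: nat graph) p. n = Suc m \<and> split_step X G Y p
        \<and> split_chain_nat Y (lift_group Y p G) m)" unfolding split_admissible_chain_def by simp
    thus "n \<in> {..Suc (Suc B)}"
    proof
      assume "\<exists>m (Y :: nat graph) p. n = Suc m \<and> split_step X G Y p \<and> split_chain_nat Y (lift_group Y p G) m"
      then obtain m and Y :: "nat graph" and p where n: "n = Suc m" and st: "split_step X G Y p"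
        and ch: "split_chain_nat Y (lift_group Y p G) m" by blast
      have P: "graph Y \<and> connected_graph Y \<and> lift_group Y p G \<subseteq> aut Y \<and> perm_group (lift_group Y p G)
        \<and> arc_transitive Y (lift_group Y p G) \<and> finite (lift_group Y p G)
        \<and> (\<forall>y\<in>verts Y. card (stab (lift_group Y p G) y) \<le> B)
        \<and> 2 * card (Hom2 G) \<le> card (Hom2 (lift_group Y p G))"
        by (rule step_props[OF st Gsub Gpg assms(5) fG sb])
      have P1: "graph Y" and P2: "connected_graph Y" and P3: "lift_group Y p G \<subseteq> aut Y"
        and P4: "perm_group (lift_group Y p G)" and P5: "arc_transitive Y (lift_group Y p G)"
        and P6: "finite (lift_group Y p G)" and P7: "\<forall>y\<in>verts Y. card (stab (lift_group Y p G) y) \<le> B"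
        using P by simp_all
      have cb: "2 ^ m * card (Hom2 (lift_group Y p G)) \<le> 2 * 2 ^ B"
        by (rule chain_bound[OF ch P1 P2 P3 P4 P5 P6 P7])
      have "Hom2 (lift_group Y p G) \<noteq> {}" using Hom2_nonempty[OF P4] by blast
      moreover have "finite (Hom2 (lift_group Y p G))" by (rule finite_Hom2[OF P6])
      ultimately have c1: "1 \<le> card (Hom2 (lift_group Y p G))" by (simp add: Suc_le_eq card_gt_0_iff)
      have "(2::nat) ^ m * 1 \<le> 2 ^ m * card (Hom2 (lift_group Y p G))" by (rule mult_le_mono2[OF c1])
      hence "(2::nat) ^ m * 1 \<le> 2 * 2 ^ B" using cb by (rule order_trans)
      hence "(2::nat) ^ m \<le> 2 ^ Suc B" by simp
      hence "m \<le> Suc B" by (rule power_le_imp_le_exp[rotated]) simp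
      thus ?thesis using n by simp
    qed simp
  qed
  thus ?thesis unfolding split_length_finite_def by (meson finite_atMost finite_subset)
qed

end
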